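(* Let $\rho_0,\rho_1,\dots,\rho_n$ be density matrices on a finite-dimensional complex Hilbert space with $\rho_j\rho_0=\rho_0\rho_j=0$ for all $j=1,\dots,n$. Let $p_1,\dots,p_n\ge0$ with $\sum_j p_j=1$, $\epsilon\in[0,1]$, $\sigma_j=\epsilon\rho_0+(1-\epsilon)\rho_j$, $\rho=\sum_j p_j\rho_j$ and $\sigma=\sum_j p_j\sigma_j$. Suppose $\operatorname{tr}(\rho_j^2)\ge\operatorname{tr}(\sigma_j^2)$ for all $j$ and $\operatorname{tr}(\rho^2)\ge\operatorname{tr}(\sigma^2)$. Then $$\sum_{j=1}^n p_j\,\mathcal{F}_2(\rho_j,\sigma_j)=\mathcal{F}_2(\rho,\sigma)=1-\epsilon,$$ where $\mathcal{F}_2(\alpha,\beta)=\operatorname{tr}(\alpha\beta)/\max[\operatorname{tr}(\alpha^2),\operatorname{tr}(\beta^2)]$.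
   Context: A density matrix is a positive semidefinite operator of unit trace. *)

theory Defs
  imports "HOL-Analysis.Analysis"
begin

definition hermitian :: "complex^'n^'n \<Rightarrow> bool" where
  "hermitian A \<longleftrightarrow> (\<forall>i j. A$i$j = cnj (A$j$i))"

definition psd :: "complex^'n^'n \<Rightarrow> bool" where
  "psd A \<longleftrightarrow> hermitian A \<and>
     (\<forall>v :: complex^'n. 0 \<le> Re (\<Sum>i\<in>UNIV. cnj (v$i) * (A *v v)$i))"

definition density_matrix :: "complex^'n^'n \<Rightarrow> bool" where
  "density_matrix A \<longleftrightarrow> psd A \<and> trace A = 1"

text \<open>F_2(a,b) = tr(ab) / max(tr(a^2), tr(b^2)); these traces are real for Hermitian
  arguments, so we take real parts.\<close>
definition F2 :: "complex^'n^'n \<Rightarrow> complex^'n^'n \<Rightarrow> real" where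
  "F2 a b = Re (trace (a ** b)) / max (Re (trace (a ** a))) (Re (trace (b ** b)))"

end

theory Submission
  imports Defs
begin


lemma mm_scaleR_left: "((c::real) *\<^sub>R (A::complex^'n^'m)) ** (B::complex^'k^'n) = c *\<^sub>R (A ** B)"
  by (simp add: matrix_matrix_mult_def vec_eq_iff scaleR_sum_right)

lemma mm_scaleR_right: "(A::complex^'n^'m) ** ((c::real) *\<^sub>R (B::complex^'k^'n)) = c *\<^sub>R (A ** B)"
  by (simp add: matrix_matrix_mult_def vec_eq_iff scaleR_sum_right)

lemma trace_scaleR: "trace ((c::real) *\<^sub>R (A::complex^'n^'n)) = c *\<^sub>R trace A"
  by (simp add: trace_def scaleR_sum_right)

lemma mm_add_right: "((A::complex^'n^'m) + B) ** (C::complex^'k^'n) = A ** C + B ** C"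
  by (simp add: matrix_matrix_mult_def vec_eq_iff distrib_right sum.distrib)

lemma trace_zero: "trace (0::complex^'n^'n) = 0"
  unfolding trace_def by simp

lemma trace_sum: "trace (sum f S) = (\<Sum>j\<in>S. trace (f j :: complex^'n^'n))"
  by (induction S rule: infinite_finite_induct) (simp_all add: trace_add trace_zero)

lemma mm_sum_left: "(sum f S) ** (B::complex^'k^'n) = sum (\<lambda>j. (f j :: complex^'n^'m) ** B) S"
  by (induction S rule: infinite_finite_induct) (simp_all add: mm_add_right)

lemma herm_add: "hermitian A \<Longrightarrow> hermitian B \<Longrightarrow> hermitian (A + B)"
  unfolding hermitian_def by (metis complex_cnj_add vector_add_component)

lemma herm_scale: "hermitian A \<Longrightarrow> hermitian ((c::real) *\<^sub>R A)"
  unfolding hermitian_def by (metis complex_cnj_scaleR vector_scaleR_component)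

lemma herm_zero: "hermitian 0"
  unfolding hermitian_def by simp

lemma hermitian_sum: "(\<And>j. j \<in> S \<Longrightarrow> hermitian (f j)) \<Longrightarrow> hermitian (sum (\<lambda>j. (c j::real) *\<^sub>R f j) S)"
proof (induction S rule: infinite_finite_induct)
  case (infinite S) then show ?case by (simp add: herm_zero)
next
  case empty then show ?case by (simp add: herm_zero)
next
  case (insert x F) then show ?case
    by (simp add: herm_add herm_scale)
qed

lemma trace_sq_pos:
  assumes h: "hermitian (A::complex^'n^'n)" and t: "trace A = 1"
  shows "Re (trace (A ** A)) > 0"
proof -
  have eq: "Re (trace (A ** A)) = (\<Sum>i\<in>UNIV. \<Sum>k\<in>UNIV. (cmod (A$i$k))^2)"
  proof -
    have "Re (trace (A ** A)) = (\<Sum>i\<in>UNIV. \<Sum>k\<in>UNIV. Re (A$i$k * A$k$i))"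
      by (simp add: trace_def matrix_matrix_mult_def)
    also have "\<dots> = (\<Sum>i\<in>UNIV. \<Sum>k\<in>UNIV. (cmod (A$i$k))^2)"
    proof (intro sum.cong refl)
      fix i k
      have "A$k$i = cnj (A$i$k)" using h unfolding hermitian_def by blast
      then show "Re (A$i$k * A$k$i) = (cmod (A$i$k))^2"
        by (simp flip: complex_norm_square)
    qed
    finally show ?thesis .
  qed
  show ?thesis
  proof (rule ccontr)
    assume "\<not> ?thesis"
    then have "(\<Sum>i\<in>UNIV. \<Sum>k\<in>UNIV. (cmod (A$i$k))^2) = 0"
      using eq by (smt (verit) sum_nonneg zero_le_power2)
    then have "\<forall>i\<in>UNIV. (\<Sum>k\<in>UNIV. (cmod (A$i$k))^2) = 0"
      by (subst (asm) sum_nonneg_eq_0_iff) (auto intro: sum_nonneg)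
    then have "\<forall>i k. A$i$k = 0"
      by (simp add: sum_nonneg_eq_0_iff)
    then have "trace A = 0" by (simp add: trace_def)
    with t show False by simp
  qed
qed

lemma key:
  assumes pos: "Re (trace (A ** A)) > 0"
    and o1: "(A::complex^'n^'n) ** R = 0"
    and pu: "Re (trace (A ** A)) \<ge> Re (trace (S ** S))"
    and S: "S = (e::real) *\<^sub>R R + (1 - e) *\<^sub>R A"
  shows "F2 A S = 1 - e"
proof -
  have "A ** S = (1 - e) *\<^sub>R (A ** A)"
    using o1 by (simp add: S matrix_add_ldistrib mm_scaleR_right)
  then have "Re (trace (A ** S)) = (1 - e) * Re (trace (A ** A))"
    by (simp add: trace_scaleR)
  then show ?thesis using pos pu by (simp add: F2_def max_def)
qed

theorem mainTheorem10:
  fixes rho :: "nat \<Rightarrow> complex^'n^'n" and p :: "nat \<Rightarrow> real"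
    and n :: nat and \<epsilon> :: real
  assumes dens: "\<And>j. j \<le> n \<Longrightarrow> density_matrix (rho j)"
    and orth: "\<And>j. 1 \<le> j \<Longrightarrow> j \<le> n \<Longrightarrow> rho j ** rho 0 = 0 \<and> rho 0 ** rho j = 0"
    and pnn: "\<And>j. 1 \<le> j \<Longrightarrow> j \<le> n \<Longrightarrow> p j \<ge> 0"
    and psum: "(\<Sum>j=1..n. p j) = 1"
    and eps: "0 \<le> \<epsilon>" "\<epsilon> \<le> 1"
    and pur_j: "\<And>j. 1 \<le> j \<Longrightarrow> j \<le> n \<Longrightarrow>
        Re (trace (rho j ** rho j)) \<ge>
        Re (trace ((\<epsilon> *\<^sub>R rho 0 + (1 - \<epsilon>) *\<^sub>R rho j) ** (\<epsilon> *\<^sub>R rho 0 + (1 - \<epsilon>) *\<^sub>R rho j)))"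
    and pur: "Re (trace ((\<Sum>j=1..n. p j *\<^sub>R rho j) ** (\<Sum>j=1..n. p j *\<^sub>R rho j))) \<ge>
        Re (trace ((\<Sum>j=1..n. p j *\<^sub>R (\<epsilon> *\<^sub>R rho 0 + (1 - \<epsilon>) *\<^sub>R rho j)) **
                   (\<Sum>j=1..n. p j *\<^sub>R (\<epsilon> *\<^sub>R rho 0 + (1 - \<epsilon>) *\<^sub>R rho j))))"
  shows "(\<Sum>j=1..n. p j * F2 (rho j) (\<epsilon> *\<^sub>R rho 0 + (1 - \<epsilon>) *\<^sub>R rho j)) =
           F2 (\<Sum>j=1..n. p j *\<^sub>R rho j) (\<Sum>j=1..n. p j *\<^sub>R (\<epsilon> *\<^sub>R rho 0 + (1 - \<epsilon>) *\<^sub>R rho j))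
       \<and> F2 (\<Sum>j=1..n. p j *\<^sub>R rho j) (\<Sum>j=1..n. p j *\<^sub>R (\<epsilon> *\<^sub>R rho 0 + (1 - \<epsilon>) *\<^sub>R rho j)) = 1 - \<epsilon>"
proof -
  define r where "r = (\<Sum>j=1..n. p j *\<^sub>R rho j)"
  have dj: "\<And>j. 1 \<le> j \<Longrightarrow> j \<le> n \<Longrightarrow> density_matrix (rho j)" using dens by simp
  have each: "F2 (rho j) (\<epsilon> *\<^sub>R rho 0 + (1 - \<epsilon>) *\<^sub>R rho j) = 1 - \<epsilon>"
    if "j \<in> {1..n}" for j
  proof (rule key[OF _ _ pur_j refl])
    show "0 < Re (trace (rho j ** rho j))"
      using dj[of j] that by (intro trace_sq_pos) (auto simp: density_matrix_def psd_def)
    show "rho j ** rho 0 = 0" using orth[of j] that by auto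
  qed (use that in auto)
  have lhs: "(\<Sum>j=1..n. p j * F2 (rho j) (\<epsilon> *\<^sub>R rho 0 + (1 - \<epsilon>) *\<^sub>R rho j)) = 1 - \<epsilon>"
    using psum by (simp add: each sum_distrib_right[symmetric])
  have sig: "(\<Sum>j=1..n. p j *\<^sub>R (\<epsilon> *\<^sub>R rho 0 + (1 - \<epsilon>) *\<^sub>R rho j)) = \<epsilon> *\<^sub>R rho 0 + (1 - \<epsilon>) *\<^sub>R r"
  proof -
    have "(\<Sum>j=1..n. p j *\<^sub>R (\<epsilon> *\<^sub>R rho 0 + (1 - \<epsilon>) *\<^sub>R rho j))
        = (\<Sum>j=1..n. p j *\<^sub>R \<epsilon> *\<^sub>R rho 0) + (\<Sum>j=1..n. (1 - \<epsilon>) *\<^sub>R p j *\<^sub>R rho j)"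
      by (simp add: scaleR_right_distrib sum.distrib) (rule sum.cong, rule refl, simp only: mult.commute)
    also have "\<dots> = (\<Sum>j=1..n. p j) *\<^sub>R \<epsilon> *\<^sub>R rho 0 + (1 - \<epsilon>) *\<^sub>R r"
      unfolding r_def scaleR_sum_left scaleR_sum_right by (rule refl)
    finally show ?thesis using psum by simp
  qed
  have herm: "hermitian r" unfolding r_def
    by (rule hermitian_sum) (use dj in \<open>auto simp: density_matrix_def psd_def\<close>)
  have tr: "trace r = 1"
  proof -
    have "trace r = (\<Sum>j=1..n. p j *\<^sub>R trace (rho j))"
      unfolding r_def by (simp add: trace_sum trace_scaleR)
    also have "\<dots> = (\<Sum>j=1..n. complex_of_real (p j))"
      using dj by (intro sum.cong refl) (auto simp: density_matrix_def scaleR_conv_of_real)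
    finally show ?thesis using psum by (metis of_real_1 of_real_sum)
  qed
  have r0: "r ** rho 0 = 0"
    unfolding r_def mm_sum_left using orth by (intro sum.neutral) (auto simp: mm_scaleR_left)
  have rhs: "F2 r (\<epsilon> *\<^sub>R rho 0 + (1 - \<epsilon>) *\<^sub>R r) = 1 - \<epsilon>"
    by (rule key[OF trace_sq_pos[OF herm tr] r0 _ refl]) (use pur in \<open>unfold sig, unfold r_def\<close>)
  show ?thesis using lhs rhs unfolding sig unfolding r_def by simp
qed

end
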